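(* In the calculus $\lambda^{RE}$ described in the context: if $e_1\to^*e_1'$ and $e_2\to^*e_2'$, then $\delta\vdash e_1'\approx e_2':\tau$ if and only if $\delta\vdash e_1\approx e_2:\tau$.
   Context: Syntax of $\lambda^{RE}$. Basic types $b ::= \mathsf{Bool}\mid\mathsf{Unit}$. Constants $c ::= \mathsf{true}\mid\mathsf{false}\mid\mathsf{unit}\mid (=_b)\mid (=_{(c,b)})$. Expressions $e ::= c\mid x\mid e\ e\mid \lambda x{:}\tau.\,e\mid \mathsf{BEq}_b\ e\ e\ e\mid \mathsf{XEq}_{x:\tau\to\tau}\ e\ e\ e$. Values $v ::= c\mid \lambda x{:}\tau.\,e\mid \mathsf{BEq}_b\ e\ e\ v\mid \mathsf{XEq}_{x:\tau\to\tau}\ e\ e\ v$. Types $\tau ::= \{x{:}b\mid e\}\mid x{:}\tau\to\tau\mid \mathsf{PEq}_{\tau}\{e\}\{e\}$. $e[x:=e']$ is capture-avoiding substitution. Reduction: evaluation contexts $E ::= \bullet\mid E\ e\mid v\ E\mid \mathsf{BEq}_b\ e\ e\ E\mid\mathsf{XEq}_{x:\tau\to\tau}\ e\ e\ E$; $E[e]\to E[e']$ if $e\to e'$; $(\lambda x{:}\tau.\,e)\ v\to e[x:=v]$; $(=_b)\ c_1\to(=_{(c_1,b)})$; $(=_{(c_1,b)})\ c_2\to\mathsf{true}$ if $c_1,c_2$ syntactically equal, else $\to\mathsf{false}$. $\to^*$ is the reflexive–transitive closure. Equivalence logical relation. A pending substitution $\delta$ maps variables to pairs of closed values; $\delta_1,\delta_2$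 are its component substitutions, and $\delta,(v_1,v_2)/x$ extends it. Value relation $\delta\vdash v_1\approx_{val}v_2:\tau$: for $\{x{:}b\mid r\}$: $v_1=v_2=c$ with $c$ a constant of simple type $b$, $\delta_1(r[x:=c])\to^*\mathsf{true}$ and $\delta_2(r[x:=c])\to^*\mathsf{true}$; for $x{:}\tau_x\to\tau$: for all $v_3,v_4$ with $\delta\vdash v_3\approx_{val}v_4:\tau_x$, $\delta,(v_3,v_4)/x\vdash v_1\ v_3\approx v_2\ v_4:\tau$; for $\mathsf{PEq}_\tau\{e_l\}\{e_r\}$: $\delta\vdash\delta_1(e_l)\approx\delta_2(e_r):\tau$. Expression relation: $\delta\vdash e_1\approx e_2:\tau$ iff $e_1\to^*v_1$, $e_2\to^*v_2$ for some values and $\delta\vdash v_1\approx_{val}v_2:\tau$. *)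

theory Defs
  imports Main
begin

type_synonym var = nat

datatype bty = TBool | TUnit

text \<open>Constants: true, false, unit, (=_b), (=_(c,b)).\<close>
datatype const = CTrue | CFalse | CUnit | CEq bty | CEq1 const bty

datatype expr =
    Const const
  | Var var
  | App expr expr
  | Lam var ty expr
  | BEq bty expr expr expr
  | XEq var ty ty expr expr expr        \<comment> \<open>XEq_{x:\<tau>\<rightarrow>\<tau>'} e e e  (x bound in \<tau>')\<close>
and ty =
    TRef var bty expr                   \<comment> \<open>{x:b | e}  (x bound in e)\<close>
  | TArr var ty ty                      \<comment> \<open>x:\<tau>x \<rightarrow> \<tau>  (x bound in \<tau>)\<close>
  | TPEq ty expr expr

inductive is_value :: "expr \<Rightarrow> bool" where
  "is_value (Const c)"
| "is_value (Lam x t e)"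
| "is_value v \<Longrightarrow> is_value (BEq b e1 e2 v)"
| "is_value v \<Longrightarrow> is_value (XEq x t1 t2 e1 e2 v)"

fun fv_e :: "expr \<Rightarrow> var set" and fv_t :: "ty \<Rightarrow> var set" where
  "fv_e (Const c) = {}"
| "fv_e (Var x) = {x}"
| "fv_e (App e1 e2) = fv_e e1 \<union> fv_e e2"
| "fv_e (Lam x t e) = fv_t t \<union> (fv_e e - {x})"
| "fv_e (BEq b e1 e2 e3) = fv_e e1 \<union> fv_e e2 \<union> fv_e e3"
| "fv_e (XEq x t1 t2 e1 e2 e3) = fv_t t1 \<union> (fv_t t2 - {x}) \<union> fv_e e1 \<union> fv_e e2 \<union> fv_e e3"
| "fv_t (TRef x b e) = fv_e e - {x}"
| "fv_t (TArr x t1 t2) = fv_t t1 \<union> (fv_t t2 - {x})"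
| "fv_t (TPEq t e1 e2) = fv_t t \<union> fv_e e1 \<union> fv_e e2"

definition closed :: "expr \<Rightarrow> bool" where
  "closed e \<longleftrightarrow> fv_e e = {}"

definition swap_v :: "var \<Rightarrow> var \<Rightarrow> var \<Rightarrow> var" where
  "swap_v a b z = (if z = a then b else if z = b then a else z)"

fun swap_e :: "var \<Rightarrow> var \<Rightarrow> expr \<Rightarrow> expr" and swap_t :: "var \<Rightarrow> var \<Rightarrow> ty \<Rightarrow> ty" where
  "swap_e a b (Const c) = Const c"
| "swap_e a b (Var x) = Var (swap_v a b x)"
| "swap_e a b (App e1 e2) = App (swap_e a b e1) (swap_e a b e2)"
| "swap_e a b (Lam x t e) = Lam (swap_v a b x) (swap_t a b t) (swap_e a b e)"
| "swap_e a b (BEq bt e1 e2 e3) = BEq bt (swap_e a b e1) (swap_e a b e2) (swap_e a b e3)"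
| "swap_e a b (XEq x t1 t2 e1 e2 e3) =
     XEq (swap_v a b x) (swap_t a b t1) (swap_t a b t2) (swap_e a b e1) (swap_e a b e2) (swap_e a b e3)"
| "swap_t a b (TRef x bt e) = TRef (swap_v a b x) bt (swap_e a b e)"
| "swap_t a b (TArr x t1 t2) = TArr (swap_v a b x) (swap_t a b t1) (swap_t a b t2)"
| "swap_t a b (TPEq t e1 e2) = TPEq (swap_t a b t) (swap_e a b e1) (swap_e a b e2)"

fun sz_e :: "expr \<Rightarrow> nat" and sz_t :: "ty \<Rightarrow> nat" where
  "sz_e (Const c) = 1"
| "sz_e (Var x) = 1"
| "sz_e (App e1 e2) = Suc (sz_e e1 + sz_e e2)"
| "sz_e (Lam x t e) = Suc (sz_t t + sz_e e)"
| "sz_e (BEq b e1 e2 e3) = Suc (sz_e e1 + sz_e e2 + sz_e e3)"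
| "sz_e (XEq x t1 t2 e1 e2 e3) = Suc (sz_t t1 + sz_t t2 + sz_e e1 + sz_e e2 + sz_e e3)"
| "sz_t (TRef x b e) = Suc (sz_e e)"
| "sz_t (TArr x t1 t2) = Suc (sz_t t1 + sz_t t2)"
| "sz_t (TPEq t e1 e2) = Suc (sz_t t + sz_e e1 + sz_e e2)"

lemma sz_swap: "sz_e (swap_e a b e) = sz_e e" "sz_t (swap_t a b t) = sz_t t"
  by (induction e and t) auto

definition fresh :: "var set \<Rightarrow> var" where
  "fresh S = Suc (Max (insert 0 S))"

function subst_e :: "var \<Rightarrow> expr \<Rightarrow> expr \<Rightarrow> expr" and subst_t :: "var \<Rightarrow> expr \<Rightarrow> ty \<Rightarrow> ty" where
  "subst_e x s (Const c) = Const c"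
| "subst_e x s (Var y) = (if y = x then s else Var y)"
| "subst_e x s (App e1 e2) = App (subst_e x s e1) (subst_e x s e2)"
| "subst_e x s (Lam y t e) =
     (if y = x then Lam y (subst_t x s t) e
      else if y \<in> fv_e s then
        (let z = fresh (fv_e s \<union> fv_e e \<union> {x, y}) in Lam z (subst_t x s t) (subst_e x s (swap_e y z e)))
      else Lam y (subst_t x s t) (subst_e x s e))"
| "subst_e x s (BEq b e1 e2 e3) = BEq b (subst_e x s e1) (subst_e x s e2) (subst_e x s e3)"
| "subst_e x s (XEq y t1 t2 e1 e2 e3) =
     (if y = x then XEq y (subst_t x s t1) t2 (subst_e x s e1) (subst_e x s e2) (subst_e x s e3)
      else if y \<in> fv_e s then
        (let z = fresh (fv_e s \<union> fv_t t2 \<union> {x, y}) in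
          XEq z (subst_t x s t1) (subst_t x s (swap_t y z t2)) (subst_e x s e1) (subst_e x s e2) (subst_e x s e3))
      else XEq y (subst_t x s t1) (subst_t x s t2) (subst_e x s e1) (subst_e x s e2) (subst_e x s e3))"
| "subst_t x s (TRef y b e) =
     (if y = x then TRef y b e
      else if y \<in> fv_e s then
        (let z = fresh (fv_e s \<union> fv_e e \<union> {x, y}) in TRef z b (subst_e x s (swap_e y z e)))
      else TRef y b (subst_e x s e))"
| "subst_t x s (TArr y t1 t2) =
     (if y = x then TArr y (subst_t x s t1) t2
      else if y \<in> fv_e s then
        (let z = fresh (fv_e s \<union> fv_t t2 \<union> {x, y}) in TArr z (subst_t x s t1) (subst_t x s (swap_t y z t2)))
      else TArr y (subst_t x s t1) (subst_t x s t2))"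
| "subst_t x s (TPEq t e1 e2) = TPEq (subst_t x s t) (subst_e x s e1) (subst_e x s e2)"
  by pat_completeness auto
termination
  by (relation "measure (\<lambda>a. case a of Inl (x, s, e) \<Rightarrow> sz_e e | Inr (x, s, t) \<Rightarrow> sz_t t)")
     (auto simp: sz_swap)

inductive step :: "expr \<Rightarrow> expr \<Rightarrow> bool" (infix "\<longmapsto>" 50) where
  ctx_app1: "e \<longmapsto> e' \<Longrightarrow> App e e2 \<longmapsto> App e' e2"
| ctx_app2: "is_value v \<Longrightarrow> e \<longmapsto> e' \<Longrightarrow> App v e \<longmapsto> App v e'"
| ctx_beq: "e \<longmapsto> e' \<Longrightarrow> BEq b e1 e2 e \<longmapsto> BEq b e1 e2 e'"
| ctx_xeq: "e \<longmapsto> e' \<Longrightarrow> XEq x t1 t2 e1 e2 e \<longmapsto> XEq x t1 t2 e1 e2 e'"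
| beta: "is_value v \<Longrightarrow> App (Lam x t e) v \<longmapsto> subst_e x v e"
| eq1: "App (Const (CEq b)) (Const c1) \<longmapsto> Const (CEq1 c1 b)"
| eq2: "App (Const (CEq1 c1 b)) (Const c2) \<longmapsto> (if c1 = c2 then Const CTrue else Const CFalse)"

abbreviation steps :: "expr \<Rightarrow> expr \<Rightarrow> bool" (infix "\<longmapsto>*" 50) where
  "e \<longmapsto>* e' \<equiv> step\<^sup>*\<^sup>* e e'"

fun const_btype :: "const \<Rightarrow> bty \<Rightarrow> bool" where
  "const_btype CTrue b = (b = TBool)"
| "const_btype CFalse b = (b = TBool)"
| "const_btype CUnit b = (b = TUnit)"
| "const_btype (CEq _) b = False"
| "const_btype (CEq1 _ _) b = False"

text \<open>A pending substitution: a list of bindings x |-> (v1, v2); extension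
  delta,(v1,v2)/x is consing, and the most recent binding of x takes precedence.\<close>
type_synonym psubst = "(var \<times> expr \<times> expr) list"

definition pending :: "psubst \<Rightarrow> bool" where
  "pending \<delta> \<longleftrightarrow> (\<forall>(x, v1, v2) \<in> set \<delta>.
      is_value v1 \<and> closed v1 \<and> is_value v2 \<and> closed v2)"

fun psubst1 :: "psubst \<Rightarrow> expr \<Rightarrow> expr" where
  "psubst1 [] e = e"
| "psubst1 ((x, v1, v2) # \<delta>) e = psubst1 \<delta> (subst_e x v1 e)"

fun psubst2 :: "psubst \<Rightarrow> expr \<Rightarrow> expr" where
  "psubst2 [] e = e"
| "psubst2 ((x, v1, v2) # \<delta>) e = psubst2 \<delta> (subst_e x v2 e)"

fun valrel :: "psubst \<Rightarrow> expr \<Rightarrow> expr \<Rightarrow> ty \<Rightarrow> bool" where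
  "valrel \<delta> v1 v2 (TRef x b r) =
     (\<exists>c. v1 = Const c \<and> v2 = Const c \<and> const_btype c b \<and>
          psubst1 \<delta> (subst_e x (Const c) r) \<longmapsto>* Const CTrue \<and>
          psubst2 \<delta> (subst_e x (Const c) r) \<longmapsto>* Const CTrue)"
| "valrel \<delta> v1 v2 (TArr x tx t) =
     (\<forall>v3 v4. is_value v3 \<and> closed v3 \<and> is_value v4 \<and> closed v4 \<and> valrel \<delta> v3 v4 tx \<longrightarrow>
        (\<exists>w1 w2. App v1 v3 \<longmapsto>* w1 \<and> is_value w1 \<and> App v2 v4 \<longmapsto>* w2 \<and> is_value w2 \<and>
                 valrel ((x, v3, v4) # \<delta>) w1 w2 t))"
| "valrel \<delta> v1 v2 (TPEq t el er) =
     (\<exists>w1 w2. psubst1 \<delta> el \<longmapsto>* w1 \<and> is_value w1 \<and> psubst2 \<delta> er \<longmapsto>* w2 \<and> is_value w2 \<and>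
              valrel \<delta> w1 w2 t)"

definition exprel :: "psubst \<Rightarrow> expr \<Rightarrow> expr \<Rightarrow> ty \<Rightarrow> bool" where
  "exprel \<delta> e1 e2 \<tau> \<longleftrightarrow>
     (\<exists>v1 v2. e1 \<longmapsto>* v1 \<and> is_value v1 \<and> e2 \<longmapsto>* v2 \<and> is_value v2 \<and> valrel \<delta> v1 v2 \<tau>)"

lemma valrel_PEq_exprel:
  "valrel \<delta> v1 v2 (TPEq t el er) = exprel \<delta> (psubst1 \<delta> el) (psubst2 \<delta> er) t"
  by (simp add: exprel_def)

lemma valrel_Arr_exprel:
  "valrel \<delta> v1 v2 (TArr x tx t) =
     (\<forall>v3 v4. is_value v3 \<and> closed v3 \<and> is_value v4 \<and> closed v4 \<and> valrel \<delta> v3 v4 tx \<longrightarrow>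
        exprel ((x, v3, v4) # \<delta>) (App v1 v3) (App v2 v4) t)"
  by (simp add: exprel_def)

end

theory Submission
  imports Defs
begin

lemma value_no_step: "is_value v \<Longrightarrow> \<not> v \<longmapsto> e"
proof (induction v arbitrary: e rule: is_value.induct)
  case (1 c) then show ?case by (auto elim: step.cases)
next
  case (2 x t e) then show ?case by (auto elim: step.cases)
next
  case (3 v b e1 e2) then show ?case by (auto elim: step.cases)
next
  case (4 v x t1 t2 e1 e2) then show ?case by (auto elim: step.cases)
qed
lemma lam_no_step: "\<not> Lam x t e \<longmapsto> e'" by (auto elim: step.cases)
lemma const_no_step: "\<not> Const c \<longmapsto> e'" by (auto elim: step.cases)
lemma step_det: "e \<longmapsto> e1 \<Longrightarrow> e \<longmapsto> e2 \<Longrightarrow> e1 = e2"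
proof (induction e e1 arbitrary: e2 rule: step.induct)
  case (ctx_app1 e e' e2a)
  from ctx_app1.prems show ?case
    by (cases rule: step.cases) (use ctx_app1 value_no_step lam_no_step const_no_step in blast)+
next
  case (ctx_app2 v e e')
  from ctx_app2.prems show ?case
    by (cases rule: step.cases) (use ctx_app2 value_no_step is_value.intros in blast)+
next
  case (ctx_beq e e' b e1 e2a)
  from ctx_beq.prems show ?case
    by (cases rule: step.cases) (use ctx_beq in auto)
next
  case (ctx_xeq e e' x t1 t2 e1 e2a)
  from ctx_xeq.prems show ?case
    by (cases rule: step.cases) (use ctx_xeq in auto)
next
  case (beta v x t e)
  from beta.prems show ?case
    by (cases rule: step.cases) (use beta value_no_step lam_no_step in blast)+
next
  case (eq1 b c1)
  from eq1.prems show ?case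
    by (cases rule: step.cases) (use const_no_step in blast)+
next
  case (eq2 c1 b c2)
  from eq2.prems show ?case
    by (cases rule: step.cases) (use const_no_step in blast)+
qed

lemma steps_to_value: "e \<longmapsto>* e' \<Longrightarrow> e \<longmapsto>* v \<Longrightarrow> is_value v \<Longrightarrow> e' \<longmapsto>* v"
proof (induction rule: rtranclp_induct)
  case base then show ?case by simp
next
  case (step y z)
  have "y \<longmapsto>* v" using step by simp
  then show ?case
  proof (cases rule: converse_rtranclpE)
    case base then show ?thesis using step value_no_step by blast
  next
    case (step w) then show ?thesis using step_det \<open>y \<longmapsto> z\<close> by blast
  qed
qed

theorem lemmaB19:
  assumes "pending \<delta>"
    and "e\<^sub>1 \<longmapsto>* e\<^sub>1'" and "e\<^sub>2 \<longmapsto>* e\<^sub>2'"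
  shows "exprel \<delta> e\<^sub>1' e\<^sub>2' \<tau> \<longleftrightarrow> exprel \<delta> e\<^sub>1 e\<^sub>2 \<tau>"
proof
  assume "exprel \<delta> e\<^sub>1' e\<^sub>2' \<tau>"
  then show "exprel \<delta> e\<^sub>1 e\<^sub>2 \<tau>" unfolding exprel_def
    using assms(2,3) by (meson rtranclp_trans)
next
  assume "exprel \<delta> e\<^sub>1 e\<^sub>2 \<tau>"
  then obtain v1 v2 where "e\<^sub>1 \<longmapsto>* v1" "is_value v1" "e\<^sub>2 \<longmapsto>* v2" "is_value v2" "valrel \<delta> v1 v2 \<tau>"
    unfolding exprel_def by blast
  then show "exprel \<delta> e\<^sub>1' e\<^sub>2' \<tau>" unfolding exprel_def
    using assms(2,3) steps_to_value by blast
qed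

end
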